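(* Let $U$ be a finite set and let $Q=(q_{ij})$ and $Q'=(q'_{ij})$ be two PCMC rate families on $U$ with stationary distributions $\pi=\pi_U$ and $\pi'=\pi'_U$ of their chains on $U$. Suppose $A_1,\dots,A_k$ is a contractible partition of $U$ for both $Q$ and $Q'$ with respect to the same $\Lambda=(\lambda_{ij})_{i\ne j}$. Then for every $i\in\{1,\dots,k\}$, \[\sum_{x\in A_i}p_{xU}=\sum_{x\in A_i}p'_{xU},\] i.e. $\pi(A_i)=\pi'(A_i)$.
   Context: Pairwise Choice Markov Chain (PCMC) model: $U$ is a finite set of alternatives; the parameters are off-diagonal rates $q_{ij}\ge 0$ ($i\neq j\in U$) subject to $q_{ij}+q_{ji}\ge 1$ for all distinct $i,j$. $Q_U$ is the $U\times U$ matrix with these off-diagonal entries and diagonal entries $q_{ii}=-\sum_{j\neq i} q_{ij}$; $\pi_U$ is the unique probability vector with $\pi_U^TQ_U=0$, and $p_{iU}=\pi_U(i)$ (similarly $p'_{iU}=\pi'_U(i)$ for $Q'$). For $A\subseteq U$, $\pi(A)=\sum_{x\in A}\pi(x)$. Contractible partition: a partition of $U$ into nonempty sets $A_1,\dots,A_k$ is contractible with respect to $\Lambda=(\lambda_{ij})_{i\ne j\in\{1,\dots,k\}}$ if $q_{ab}=\lambda_{ij}$ for all $a\in A_i$, $b\in A_j$, $i\ne j$ (rates within a single block are unrestricted beyond the PCMC constraints). *)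

theory Defs
  imports "HOL-Analysis.Analysis"
begin

definition pcmc_rates :: "'a set \<Rightarrow> ('a \<Rightarrow> 'a \<Rightarrow> real) \<Rightarrow> bool" where
  "pcmc_rates U q \<longleftrightarrow> finite U \<and>
     (\<forall>i\<in>U. \<forall>j\<in>U. i \<noteq> j \<longrightarrow> q i j \<ge> 0 \<and> q i j + q j i \<ge> 1)"

definition rate_matrix :: "'a set \<Rightarrow> ('a \<Rightarrow> 'a \<Rightarrow> real) \<Rightarrow> 'a \<Rightarrow> 'a \<Rightarrow> real" where
  "rate_matrix U q i j = (if i = j then - (\<Sum>l\<in>U - {i}. q i l) else q i j)"

definition is_stationary :: "'a set \<Rightarrow> ('a \<Rightarrow> 'a \<Rightarrow> real) \<Rightarrow> ('a \<Rightarrow> real) \<Rightarrow> bool" where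
  "is_stationary U q p \<longleftrightarrow>
     (\<forall>x\<in>U. p x \<ge> 0) \<and> (\<Sum>x\<in>U. p x) = 1 \<and>
     (\<forall>j\<in>U. (\<Sum>i\<in>U. p i * rate_matrix U q i j) = 0)"

definition pcmc_pi :: "'a set \<Rightarrow> ('a \<Rightarrow> 'a \<Rightarrow> real) \<Rightarrow> 'a \<Rightarrow> real" where
  "pcmc_pi U q = (THE p. is_stationary U q p \<and> (\<forall>x. x \<notin> U \<longrightarrow> p x = 0))"

definition is_partition :: "'a set \<Rightarrow> nat \<Rightarrow> (nat \<Rightarrow> 'a set) \<Rightarrow> bool" where
  "is_partition U k A \<longleftrightarrow>
     (\<forall>i\<in>{1..k}. A i \<noteq> {}) \<and>
     (\<forall>i\<in>{1..k}. \<forall>j\<in>{1..k}. i \<noteq> j \<longrightarrow> A i \<inter> A j = {}) \<and>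
     (\<Union>i\<in>{1..k}. A i) = U"

definition contractible_partition :: "'a set \<Rightarrow> ('a \<Rightarrow> 'a \<Rightarrow> real) \<Rightarrow> nat \<Rightarrow> (nat \<Rightarrow> 'a set)
    \<Rightarrow> (nat \<Rightarrow> nat \<Rightarrow> real) \<Rightarrow> bool" where
  "contractible_partition U q k A \<Lambda> \<longleftrightarrow> is_partition U k A \<and>
     (\<forall>i\<in>{1..k}. \<forall>j\<in>{1..k}. i \<noteq> j \<longrightarrow> (\<forall>a\<in>A i. \<forall>b\<in>A j. q a b = \<Lambda> i j))"

end

theory Submission
  imports Defs
begin

definition bal :: "'b set \<Rightarrow> ('b\<Rightarrow>'b\<Rightarrow>real) \<Rightarrow> ('b\<Rightarrow>real) \<Rightarrow> bool" where
 "bal V r p \<longleftrightarrow> (\<forall>j\<in>V. (\<Sum>i\<in>V-{j}. p i * r i j) = p j * (\<Sum>l\<in>V-{j}. r j l))"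

lemma red_bal:
  fixes W :: "'b set" and r :: "'b\<Rightarrow>'b\<Rightarrow>real"
  assumes fin: "finite W" and sW: "s \<notin> W" and jW: "j \<in> W" and Rdef: "R = (\<Sum>l\<in>W. r s l)"
    and R0: "R \<noteq> 0" and ps: "p s * R = (\<Sum>i\<in>W. p i * r i s)"
  shows "((\<Sum>i\<in>insert s W - {j}. p i * r i j) = p j * (\<Sum>l\<in>insert s W - {j}. r j l)) \<longleftrightarrow>
         ((\<Sum>i\<in>W-{j}. p i * (r i j + r i s * r s j / R)) = p j * (\<Sum>l\<in>W-{j}. r j l + r j s * r s l / R))"
proof -
  have sj: "s \<noteq> j" using sW jW by auto
  have e: "insert s W - {j} = insert s (W - {j})" using sj by auto
  have sW': "s \<notin> W - {j}" using sW by auto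
  define A where "A = (\<Sum>i\<in>W-{j}. p i * r i j)"
  define B where "B = (\<Sum>i\<in>W-{j}. p i * r i s)"
  define C where "C = (\<Sum>l\<in>W-{j}. r j l)"
  define D where "D = (\<Sum>l\<in>W-{j}. r s l)"
  have L1: "(\<Sum>i\<in>insert s W - {j}. p i * r i j) = p s * r s j + A"
    unfolding e A_def using fin sW' by (simp add: sum.insert)
  have L2: "(\<Sum>l\<in>insert s W - {j}. r j l) = r j s + C"
    unfolding e C_def using fin sW' by (simp add: sum.insert)
  have L3: "(\<Sum>i\<in>W-{j}. p i * (r i j + r i s * r s j / R)) = A + B * r s j / R"
  proof -
    have "(\<Sum>i\<in>W-{j}. p i * (r i j + r i s * r s j / R)) = (\<Sum>i\<in>W-{j}. p i * r i j + (p i * r i s) * (r s j / R))"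
      by (simp add: algebra_simps)
    also have "\<dots> = A + B * (r s j / R)" unfolding A_def B_def by (simp only: sum.distrib sum_distrib_right)
    finally show ?thesis by simp
  qed
  have L4: "(\<Sum>l\<in>W-{j}. r j l + r j s * r s l / R) = C + r j s * D / R"
  proof -
    have "(\<Sum>l\<in>W-{j}. r j l + r j s * r s l / R) = (\<Sum>l\<in>W-{j}. r j l + (r j s / R) * r s l)"
      by (simp add: algebra_simps)
    also have "\<dots> = C + (r j s / R) * D" unfolding C_def D_def by (simp only: sum.distrib sum_distrib_left)
    finally show ?thesis by simp
  qed
  have RD: "R = r s j + D" unfolding Rdef D_def using fin jW by (simp add: sum.remove)
  have psB: "p s * R = p j * r j s + B" unfolding B_def using ps fin jW by (simp add: sum.remove)
  have X1: "p s * r s j = (p j * r j s) * r s j / R + B * r s j / R" 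
    using psB R0 by (simp add: field_simps) (metis distrib_left mult.assoc mult.commute)
  have X2: "p j * r j s = (p j * r j s) * r s j / R + (p j * r j s) * D / R"
  proof -
    have "(p j * r j s) * r s j / R + (p j * r j s) * D / R = (p j * r j s) * (r s j + D) / R"
      by (simp add: add_divide_distrib distrib_left)
    also have "\<dots> = p j * r j s" using RD R0 by simp
    finally show ?thesis by simp
  qed
  have "p s * r s j + A - p j*(r j s + C) = A + B*r s j/R - p j*(C + r j s*D/R)"
    using X1 X2 by (simp add: algebra_simps)
  then show ?thesis unfolding L1 L2 L3 L4 by (intro iffI; linarith)
qed

definition stat :: "'b set \<Rightarrow> ('b\<Rightarrow>'b\<Rightarrow>real) \<Rightarrow> ('b\<Rightarrow>real) \<Rightarrow> bool" where
 "stat V r p \<longleftrightarrow> (\<forall>x\<in>V. p x \<ge> 0) \<and> sum p V = 1 \<and> bal V r p"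

definition tour :: "'b set \<Rightarrow> ('b\<Rightarrow>'b\<Rightarrow>real) \<Rightarrow> bool" where
 "tour V r \<longleftrightarrow> finite V \<and> (\<forall>i\<in>V. \<forall>j\<in>V. i \<noteq> j \<longrightarrow> r i j \<ge> 0 \<and> r i j + r j i > 0)"

lemma bal_scale: "bal V r p \<Longrightarrow> bal V r (\<lambda>x. c * p x)"
  unfolding bal_def by (simp add: mult.assoc sum_distrib_left[symmetric])

lemma bal_cong: "(\<And>x. x\<in>V \<Longrightarrow> p x = p' x) \<Longrightarrow> bal V r p \<longleftrightarrow> bal V r p'"
  unfolding bal_def by (metis (no_types, lifting) DiffD1 sum.cong)

lemma main:
  assumes "tour V r" "V \<noteq> {}"
  shows "(\<exists>p. stat V r p) \<and> (\<forall>p p'. stat V r p \<longrightarrow> stat V r p' \<longrightarrow> (\<forall>x\<in>V. p x = p' x))"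
  using assms
proof (induction "card V" arbitrary: V r rule: less_induct)
  case less
  have fin: "finite V" using less.prems tour_def by blast
  show ?case
  proof (cases "card V = 1")
    case True
    then obtain v where V: "V = {v}" by (metis card_1_singletonE)
    have "stat V r (\<lambda>_. 1)" unfolding stat_def bal_def V by simp
    moreover have "\<forall>p p'. stat V r p \<longrightarrow> stat V r p' \<longrightarrow> (\<forall>x\<in>V. p x = p' x)"
      unfolding stat_def V by simp
    ultimately show ?thesis by blast
  next
    case False
    have "card V \<noteq> 0" using fin less.prems(2) by simp
    with False have c2: "card V \<ge> 2" by linarith
    obtain a where aV: "a \<in> V" using less.prems(2) by blast
    have "card (V - {a}) \<ge> 1" using c2 aV fin by simp
    then have "V - {a} \<noteq> {}" by (intro notI) simp
    then obtain b where bV: "b \<in> V" "b \<noteq> a" by blast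
    have rpos: "\<And>i j. i\<in>V \<Longrightarrow> j\<in>V \<Longrightarrow> i\<noteq>j \<Longrightarrow> r i j \<ge> 0 \<and> r i j + r j i > 0"
      using less.prems(1) unfolding tour_def by blast
    obtain s t where sV: "s \<in> V" and tV: "t \<in> V" and st: "s \<noteq> t" and rst: "r s t > 0"
    proof (cases "r a b > 0")
      case True then show ?thesis using that aV bV by blast
    next
      case False then have "r b a > 0" using rpos[OF aV bV(1)] bV(2) by auto
      then show ?thesis using that aV bV by blast
    qed
    define W where "W = V - {s}"
    define R where "R = (\<Sum>l\<in>W. r s l)"
    have finW: "finite W" using fin W_def by simp
    have tW: "t \<in> W" using tV st W_def by simp
    have VW: "V = insert s W" and sW: "s \<notin> W" using sV W_def by auto
    have "r s t \<le> R" unfolding R_def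
      by (rule member_le_sum[OF tW _ finW]) (use rpos sV W_def in auto)
    then have Rpos: "R > 0" using rst by linarith
    define r' where "r' = (\<lambda>i j. r i j + r i s * r s j / R)"
    have tour': "tour W r'" unfolding tour_def
    proof (intro conjI[OF finW] ballI impI)
      fix i j assume ij: "i \<in> W" "j \<in> W" "i \<noteq> j"
      have iV: "i \<in> V" "i \<noteq> s" and jV: "j \<in> V" "j \<noteq> s" using ij W_def by auto
      have "r i s * r s j / R \<ge> 0" "r j s * r s i / R \<ge> 0"
        using rpos[OF iV(1) sV iV(2)] rpos[OF sV jV(1) jV(2)[symmetric]]
          rpos[OF jV(1) sV jV(2)] rpos[OF sV iV(1) iV(2)[symmetric]] Rpos by auto
      then show "r' i j \<ge> 0 \<and> r' i j + r' j i > 0" unfolding r'_def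
        using rpos[OF iV(1) jV(1) ij(3)] by auto
    qed
    have cW: "card W < card V" using fin sV W_def c2 by simp
    have IH: "(\<exists>p. stat W r' p) \<and> (\<forall>p p'. stat W r' p \<longrightarrow> stat W r' p' \<longrightarrow> (\<forall>x\<in>W. p x = p' x))"
      using less.hyps[OF cW tour'] tW by blast
    have key: "bal V r p \<longleftrightarrow> bal W r' p" if ps: "p s * R = (\<Sum>i\<in>W. p i * r i s)" for p
    proof -
      have "bal V r p \<longleftrightarrow> (\<forall>j\<in>W. (\<Sum>i\<in>insert s W - {j}. p i * r i j) = p j * (\<Sum>l\<in>insert s W - {j}. r j l))"
        unfolding bal_def VW using ps sW R_def by (auto simp: mult.commute)
      also have "\<dots> \<longleftrightarrow> bal W r' p" unfolding bal_def r'_def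
        using red_bal[OF finW sW _ R_def _ ps] Rpos by auto
      finally show ?thesis .
    qed
    have balS: "p s * R = (\<Sum>i\<in>W. p i * r i s)" if "bal V r p" for p
      using that sV unfolding bal_def R_def W_def by (auto simp: mult.commute)
    obtain p' where p': "stat W r' p'" using IH by blast
    define p0 where "p0 = (\<lambda>x. if x = s then (\<Sum>i\<in>W. p' i * r i s) / R else p' x)"
    have p0W: "\<And>x. x \<in> W \<Longrightarrow> p0 x = p' x" using sW p0_def by auto
    have p0s: "p0 s * R = (\<Sum>i\<in>W. p0 i * r i s)"
      using Rpos p0W by (simp add: p0_def)
    have "bal W r' p0" using p' bal_cong[of W p0 p'] p0W unfolding stat_def by blast
    then have b0: "bal V r p0" using key[OF p0s] by simp
    have nn: "\<And>x. x \<in> V \<Longrightarrow> p0 x \<ge> 0"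
    proof -
      fix x assume x: "x \<in> V"
      show "p0 x \<ge> 0"
      proof (cases "x = s")
        case True
        have "(\<Sum>i\<in>W. p' i * r i s) \<ge> 0"
          using p' rpos sV W_def unfolding stat_def by (intro sum_nonneg) auto
        then show ?thesis using True Rpos p0_def by simp
      next
        case False then show ?thesis using x p' p0W W_def unfolding stat_def by auto
      qed
    qed
    define T where "T = sum p0 V"
    have "T = p0 s + sum p0 W" unfolding T_def VW using finW sW by simp
    also have "sum p0 W = 1" using p' p0W unfolding stat_def by (metis sum.cong)
    finally have T: "T = p0 s + 1" .
    have "p0 s \<ge> 0" using nn sV by blast
    then have Tpos: "T > 0" using T by linarith
    have "bal V r (\<lambda>x. (1/T) * p0 x)" by (rule bal_scale[OF b0])
    moreover have "sum (\<lambda>x. (1/T) * p0 x) V = 1"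
      using Tpos by (simp only: sum_distrib_left[symmetric] T_def[symmetric]) simp
    moreover have "\<forall>x\<in>V. (1/T) * p0 x \<ge> 0" using nn Tpos by simp
    ultimately have "stat V r (\<lambda>x. (1/T) * p0 x)" unfolding stat_def by blast
    then have ex: "\<exists>p. stat V r p" by blast
    have red: "sum p W > 0 \<and> stat W r' (\<lambda>x. (1 / sum p W) * p x) \<and> p s * R = (\<Sum>i\<in>W. p i * r i s)
              \<and> sum p W = 1 - p s"
      if sp: "stat V r p" for p
    proof -
      have bs: "p s * R = (\<Sum>i\<in>W. p i * r i s)" using balS sp stat_def by blast
      have sumW: "sum p W = 1 - p s" using sp finW sW unfolding stat_def VW by simp
      have nnW: "\<And>x. x\<in>W \<Longrightarrow> p x \<ge> 0" using sp VW unfolding stat_def by auto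
      have pos: "sum p W > 0"
      proof (rule ccontr)
        assume "\<not> sum p W > 0"
        then have "sum p W = 0" using sum_nonneg[of W p] nnW by force
        then have z: "\<forall>x\<in>W. p x = 0" using sum_nonneg_eq_0_iff[OF finW] nnW by blast
        then have "(\<Sum>i\<in>W. p i * r i s) = 0" by simp
        then have "p s = 0" using bs Rpos by simp
        then show False using sumW \<open>sum p W = 0\<close> by simp
      qed
      have "bal W r' p" using key[OF bs] sp stat_def by blast
      then have "bal W r' (\<lambda>x. (1 / sum p W) * p x)" by (rule bal_scale)
      moreover have "sum (\<lambda>x. (1 / sum p W) * p x) W = 1"
        using pos by (simp only: sum_distrib_left[symmetric]) simp
      moreover have "\<forall>x\<in>W. (1 / sum p W) * p x \<ge> 0" using nnW pos by simp
      ultimately have "stat W r' (\<lambda>x. (1 / sum p W) * p x)" unfolding stat_def by blast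
      then show ?thesis using pos bs sumW by blast
    qed
    have un: "\<forall>x\<in>V. p x = p2 x" if sp: "stat V r p" and sp2: "stat V r p2" for p p2
    proof -
      define c1 where "c1 = sum p W"
      define c2 where "c2 = sum p2 W"
      note r1 = red[OF sp, folded c1_def] and r2 = red[OF sp2, folded c2_def]
      have eqW: "\<forall>x\<in>W. (1/c1) * p x = (1/c2) * p2 x" using IH r1 r2 by blast
      define k where "k = c1 / c2"
      have kW: "p x = k * p2 x" if x: "x\<in>W" for x
      proof -
        have "p x = c1 * ((1/c1) * p x)" using r1 by simp
        also have "\<dots> = c1 * ((1/c2) * p2 x)" using eqW x by simp
        finally show ?thesis unfolding k_def by simp
      qed
      have "p s * R = (\<Sum>i\<in>W. k * (p2 i * r i s))" using r1 kW by (auto intro: sum.cong)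
      also have "\<dots> = k * (p2 s * R)" using r2 by (simp add: sum_distrib_left[symmetric])
      finally have "p s = k * p2 s" using Rpos by simp
      then have kV: "\<And>x. x\<in>V \<Longrightarrow> p x = k * p2 x" using kW VW by auto
      have "1 = sum p V" using sp unfolding stat_def by simp
      also have "\<dots> = k * sum p2 V" proof -
        have "sum p V = sum (\<lambda>x. k * p2 x) V" by (rule sum.cong) (simp_all add: kV)
        then show ?thesis by (simp add: sum_distrib_left)
      qed
      also have "\<dots> = k" using sp2 unfolding stat_def by simp
      finally show ?thesis using kV by simp
    qed
    show ?thesis using ex un by blast
  qed
qed

lemma is_stat_iff:
  assumes fin: "finite U"
  shows "is_stationary U q p \<longleftrightarrow> stat U q p"
proof -
  have eq: "(\<Sum>i\<in>U. p i * rate_matrix U q i j) = (\<Sum>i\<in>U-{j}. p i * q i j) - p j * (\<Sum>l\<in>U-{j}. q j l)"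
    if j: "j \<in> U" for j
  proof -
    have "(\<Sum>i\<in>U. p i * rate_matrix U q i j) = p j * rate_matrix U q j j + (\<Sum>i\<in>U-{j}. p i * rate_matrix U q i j)"
      using fin j by (simp add: sum.remove)
    also have "(\<Sum>i\<in>U-{j}. p i * rate_matrix U q i j) = (\<Sum>i\<in>U-{j}. p i * q i j)"
      by (rule sum.cong) (auto simp: rate_matrix_def)
    finally show ?thesis by (simp add: rate_matrix_def)
  qed
  have "(\<forall>j\<in>U. (\<Sum>i\<in>U. p i * rate_matrix U q i j) = 0) \<longleftrightarrow> bal U q p"
    unfolding bal_def using eq by auto
  then show ?thesis unfolding is_stationary_def stat_def by blast
qed

lemma pcmc_tour: "pcmc_rates U q \<Longrightarrow> tour U q"
  unfolding pcmc_rates_def tour_def by force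

lemma pi_stat:
  assumes "pcmc_rates U q" "U \<noteq> {}"
  shows "is_stationary U q (pcmc_pi U q)"
proof -
  have fin: "finite U" using assms pcmc_rates_def by blast
  have M: "(\<exists>p. stat U q p) \<and> (\<forall>p p'. stat U q p \<longrightarrow> stat U q p' \<longrightarrow> (\<forall>x\<in>U. p x = p' x))"
    using main[OF pcmc_tour[OF assms(1)] assms(2)] .
  obtain p where p: "stat U q p" using M by blast
  define p0 where "p0 = (\<lambda>x. if x \<in> U then p x else 0)"
  have "stat U q p0"
  proof -
    have "bal U q p0 \<longleftrightarrow> bal U q p" by (rule bal_cong) (simp add: p0_def)
    moreover have "sum p0 U = sum p U" by (rule sum.cong) (simp_all add: p0_def)
    ultimately show ?thesis using p unfolding stat_def p0_def by auto
  qed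
  then have ex: "is_stationary U q p0 \<and> (\<forall>x. x \<notin> U \<longrightarrow> p0 x = 0)"
    using is_stat_iff[OF fin] p0_def by simp
  have "\<exists>!p. is_stationary U q p \<and> (\<forall>x. x \<notin> U \<longrightarrow> p x = 0)"
  proof (rule ex1I[of _ p0])
    show "is_stationary U q p0 \<and> (\<forall>x. x \<notin> U \<longrightarrow> p0 x = 0)" using ex .
    fix p' assume p': "is_stationary U q p' \<and> (\<forall>x. x \<notin> U \<longrightarrow> p' x = 0)"
    have "\<forall>x\<in>U. p' x = p0 x" using M p' ex is_stat_iff[OF fin] by blast
    then show "p' = p0" using p' ex by (metis ext)
  qed
  from theI'[OF this] show ?thesis unfolding pcmc_pi_def by blast
qed


lemma agg_stat:
  assumes pc: "pcmc_rates U q" and cp: "contractible_partition U q k A \<Lambda>"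
    and st: "is_stationary U q p"
  shows "stat {1..k} (\<lambda>m j. \<Lambda> m j * real (card (A j))) (\<lambda>j. sum p (A j))"
proof -
  define \<mu> where "\<mu> = (\<lambda>m j. \<Lambda> m j * real (card (A j)))"
  have fin: "finite U" using pc pcmc_rates_def by blast
  have CP: "is_partition U k A \<and> (\<forall>i\<in>{1..k}. \<forall>j\<in>{1..k}. i \<noteq> j \<longrightarrow> (\<forall>a\<in>A i. \<forall>b\<in>A j. q a b = \<Lambda> i j))"
    using cp unfolding contractible_partition_def .
  have part: "is_partition U k A" using CP by blast
  have con: "\<And>m j a b. m\<in>{1..k} \<Longrightarrow> j\<in>{1..k} \<Longrightarrow> m \<noteq> j \<Longrightarrow> a \<in> A m \<Longrightarrow> b \<in> A j \<Longrightarrow> q a b = \<Lambda> m j"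
    using CP by blast
  have PP: "(\<forall>i\<in>{1..k}. A i \<noteq> {}) \<and> (\<forall>i\<in>{1..k}. \<forall>j\<in>{1..k}. i \<noteq> j \<longrightarrow> A i \<inter> A j = {}) \<and> (\<Union>i\<in>{1..k}. A i) = U"
    using part unfolding is_partition_def .
  have disj: "\<And>m j. m\<in>{1..k} \<Longrightarrow> j\<in>{1..k} \<Longrightarrow> m \<noteq> j \<Longrightarrow> A m \<inter> A j = {}"
    using PP by blast
  have un: "(\<Union>i\<in>{1..k}. A i) = U" using PP by blast
  have sub: "\<And>m. m\<in>{1..k} \<Longrightarrow> A m \<subseteq> U" using un by blast
  have finA: "\<And>m. m\<in>{1..k} \<Longrightarrow> finite (A m)" using sub fin finite_subset by blast
  have nn: "\<forall>x\<in>U. p x \<ge> 0" and s1: "sum p U = 1"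
    and bz: "\<And>b. b\<in>U \<Longrightarrow> (\<Sum>a\<in>U. p a * rate_matrix U q a b) = 0"
    using st unfolding is_stationary_def by blast+
  have sumU: "sum g U = (\<Sum>m\<in>{1..k}. sum g (A m))" for g :: "'a \<Rightarrow> real"
  proof -
    have "sum g (\<Union>i\<in>{1..k}. A i) = (\<Sum>m\<in>{1..k}. sum g (A m))"
      by (rule sum.UNION_disjoint) (use finA disj in auto)
    then show ?thesis using un by simp
  qed
  have sumD: "sum g (U - A j) = (\<Sum>m\<in>{1..k}-{j}. sum g (A m))" if j: "j\<in>{1..k}" for g :: "'a \<Rightarrow> real" and j
  proof -
    have e: "U - A j = (\<Union>i\<in>{1..k}-{j}. A i)"
    proof
      show "U - A j \<subseteq> (\<Union>i\<in>{1..k}-{j}. A i)" using un by blast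
      show "(\<Union>i\<in>{1..k}-{j}. A i) \<subseteq> U - A j" using sub disj j by blast
    qed
    have "sum g (\<Union>i\<in>{1..k}-{j}. A i) = (\<Sum>m\<in>{1..k}-{j}. sum g (A m))"
      by (rule sum.UNION_disjoint) (use finA disj in auto)
    then show ?thesis using e by simp
  qed
  have rowsum: "(\<Sum>b\<in>U. rate_matrix U q a b) = 0" if a: "a \<in> U" for a
  proof -
    have "(\<Sum>b\<in>U. rate_matrix U q a b) = rate_matrix U q a a + (\<Sum>b\<in>U-{a}. rate_matrix U q a b)"
      using fin a by (simp add: sum.remove)
    also have "(\<Sum>b\<in>U-{a}. rate_matrix U q a b) = (\<Sum>b\<in>U-{a}. q a b)"
      by (rule sum.cong) (auto simp: rate_matrix_def)
    finally show ?thesis by (simp add: rate_matrix_def)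
  qed
  have S_other: "(\<Sum>b\<in>A j. rate_matrix U q a b) = \<mu> m j"
    if m: "m\<in>{1..k}" and j: "j\<in>{1..k}" and mj: "m \<noteq> j" and a: "a \<in> A m" for m j a
  proof -
    have "(\<Sum>b\<in>A j. rate_matrix U q a b) = (\<Sum>b\<in>A j. \<Lambda> m j)"
    proof (rule sum.cong)
      fix b assume b: "b \<in> A j"
      have "a \<noteq> b" using disj[OF m j mj] a b by blast
      then show "rate_matrix U q a b = \<Lambda> m j" using con[OF m j mj a b] by (simp add: rate_matrix_def)
    qed simp
    then show ?thesis unfolding \<mu>_def by simp
  qed
  have S_same: "(\<Sum>b\<in>A j. rate_matrix U q a b) = - (\<Sum>m\<in>{1..k}-{j}. \<mu> j m)"
    if j: "j\<in>{1..k}" and a: "a \<in> A j" for j a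
  proof -
    have aU: "a \<in> U" using sub j a by blast
    have "(\<Sum>b\<in>U. rate_matrix U q a b) = (\<Sum>b\<in>A j. rate_matrix U q a b) + (\<Sum>b\<in>U - A j. rate_matrix U q a b)"
      using sum.subset_diff[OF sub[OF j] fin, of "rate_matrix U q a"] by linarith
    then have e1: "(\<Sum>b\<in>A j. rate_matrix U q a b) = - (\<Sum>b\<in>U - A j. rate_matrix U q a b)"
      using rowsum[OF aU] by simp
    have "(\<Sum>b\<in>U - A j. rate_matrix U q a b) = (\<Sum>m\<in>{1..k}-{j}. \<Sum>b\<in>A m. rate_matrix U q a b)"
      using sumD[OF j] .
    also have "\<dots> = (\<Sum>m\<in>{1..k}-{j}. \<mu> j m)"
    proof (rule sum.cong)
      fix m assume m: "m \<in> {1..k}-{j}"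
      have "(\<Sum>b\<in>A m. rate_matrix U q a b) = (\<Sum>b\<in>A m. \<Lambda> j m)"
      proof (rule sum.cong)
        fix b assume b: "b \<in> A m"
        have "a \<noteq> b" using disj[of j m] j m a b by blast
        then show "rate_matrix U q a b = \<Lambda> j m" using con[of j m a b] j m a b by (simp add: rate_matrix_def)
      qed simp
      then show "(\<Sum>b\<in>A m. rate_matrix U q a b) = \<mu> j m" unfolding \<mu>_def by simp
    qed simp
    finally show ?thesis using e1 by simp
  qed
  have balj: "(\<Sum>m\<in>{1..k}-{j}. sum p (A m) * \<mu> m j) = sum p (A j) * (\<Sum>m\<in>{1..k}-{j}. \<mu> j m)"
    if j: "j\<in>{1..k}" for j
  proof -
    have "0 = (\<Sum>b\<in>A j. \<Sum>a\<in>U. p a * rate_matrix U q a b)"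
      using bz sub[OF j] by (simp add: subset_iff)
    also have "\<dots> = (\<Sum>a\<in>U. \<Sum>b\<in>A j. p a * rate_matrix U q a b)"
      by (rule sum.swap)
    also have "\<dots> = (\<Sum>a\<in>U. p a * (\<Sum>b\<in>A j. rate_matrix U q a b))"
      by (simp add: sum_distrib_left)
    also have "\<dots> = (\<Sum>m\<in>{1..k}. \<Sum>a\<in>A m. p a * (\<Sum>b\<in>A j. rate_matrix U q a b))"
      by (rule sumU)
    also have "\<dots> = (\<Sum>a\<in>A j. p a * (\<Sum>b\<in>A j. rate_matrix U q a b)) +
                     (\<Sum>m\<in>{1..k}-{j}. \<Sum>a\<in>A m. p a * (\<Sum>b\<in>A j. rate_matrix U q a b))"
      using j by (simp add: sum.remove)
    also have "(\<Sum>a\<in>A j. p a * (\<Sum>b\<in>A j. rate_matrix U q a b)) = - (sum p (A j) * (\<Sum>m\<in>{1..k}-{j}. \<mu> j m))"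
    proof -
      have "(\<Sum>a\<in>A j. p a * (\<Sum>b\<in>A j. rate_matrix U q a b)) = (\<Sum>a\<in>A j. p a * (- (\<Sum>m\<in>{1..k}-{j}. \<mu> j m)))"
        by (rule sum.cong) (simp_all add: S_same[OF j])
      then show ?thesis by (simp add: sum_distrib_right sum_negf)
    qed
    also have "(\<Sum>m\<in>{1..k}-{j}. \<Sum>a\<in>A m. p a * (\<Sum>b\<in>A j. rate_matrix U q a b)) = (\<Sum>m\<in>{1..k}-{j}. sum p (A m) * \<mu> m j)"
    proof (rule sum.cong)
      fix m assume m: "m \<in> {1..k}-{j}"
      have "(\<Sum>a\<in>A m. p a * (\<Sum>b\<in>A j. rate_matrix U q a b)) = (\<Sum>a\<in>A m. p a * \<mu> m j)"
        by (rule sum.cong) (use S_other[of m j] m j in auto)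
      then show "(\<Sum>a\<in>A m. p a * (\<Sum>b\<in>A j. rate_matrix U q a b)) = sum p (A m) * \<mu> m j"
        by (simp add: sum_distrib_right)
    qed simp
    finally show ?thesis by linarith
  qed
  have "bal {1..k} \<mu> (\<lambda>j. sum p (A j))" unfolding bal_def using balj by blast
  moreover have "\<forall>x\<in>{1..k}. sum p (A x) \<ge> 0" using nn sub by (meson subsetD sum_nonneg)
  moreover have "(\<Sum>j\<in>{1..k}. sum p (A j)) = 1" using sumU[of p] s1 by simp
  ultimately show ?thesis unfolding stat_def \<mu>_def by blast
qed

lemma agg_tour:
  assumes pc: "pcmc_rates U q" and cp: "contractible_partition U q k A \<Lambda>"
  shows "tour {1..k} (\<lambda>m j. \<Lambda> m j * real (card (A j)))"
proof -
  have fin: "finite U" using pc pcmc_rates_def by blast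
  have CP: "is_partition U k A \<and> (\<forall>i\<in>{1..k}. \<forall>j\<in>{1..k}. i \<noteq> j \<longrightarrow> (\<forall>a\<in>A i. \<forall>b\<in>A j. q a b = \<Lambda> i j))"
    using cp unfolding contractible_partition_def .
  have part: "is_partition U k A" using CP by blast
  have con: "\<And>m j a b. m\<in>{1..k} \<Longrightarrow> j\<in>{1..k} \<Longrightarrow> m \<noteq> j \<Longrightarrow> a \<in> A m \<Longrightarrow> b \<in> A j \<Longrightarrow> q a b = \<Lambda> m j"
    using CP by blast
  have PP: "(\<forall>i\<in>{1..k}. A i \<noteq> {}) \<and> (\<forall>i\<in>{1..k}. \<forall>j\<in>{1..k}. i \<noteq> j \<longrightarrow> A i \<inter> A j = {}) \<and> (\<Union>i\<in>{1..k}. A i) = U"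
    using part unfolding is_partition_def .
  have disj: "\<And>m j. m\<in>{1..k} \<Longrightarrow> j\<in>{1..k} \<Longrightarrow> m \<noteq> j \<Longrightarrow> A m \<inter> A j = {}"
    using PP by blast
  have un: "(\<Union>i\<in>{1..k}. A i) = U" using PP by blast
  have ne: "\<And>m. m\<in>{1..k} \<Longrightarrow> A m \<noteq> {}" using PP by blast
  have sub: "\<And>m. m\<in>{1..k} \<Longrightarrow> A m \<subseteq> U" using un by blast
  have c1: "\<And>m. m\<in>{1..k} \<Longrightarrow> real (card (A m)) \<ge> 1"
  proof -
    fix m assume m: "m\<in>{1..k}"
    have "finite (A m)" using sub[OF m] fin finite_subset by blast
    then have "card (A m) \<ge> 1" using ne[OF m] by (simp add: Suc_le_eq card_gt_0_iff)
    then show "real (card (A m)) \<ge> 1" by simp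
  qed
  show ?thesis unfolding tour_def
  proof (intro conjI[OF finite_atLeastAtMost] ballI impI)
    fix m j assume m: "m\<in>{1..k}" and j: "j\<in>{1..k}" and mj: "m \<noteq> j"
    obtain a where a: "a \<in> A m" using ne[OF m] by blast
    obtain b where b: "b \<in> A j" using ne[OF j] by blast
    have ab: "a \<noteq> b" using disj[OF m j mj] a b by blast
    have aU: "a \<in> U" and bU: "b \<in> U" using sub m j a b by blast+
    have PC: "\<forall>i\<in>U. \<forall>j\<in>U. i \<noteq> j \<longrightarrow> q i j \<ge> 0 \<and> q i j + q j i \<ge> 1"
      using pc unfolding pcmc_rates_def by (rule conjunct2)
    have "q a b \<ge> 0 \<and> q a b + q b a \<ge> 1" using PC aU bU ab by simp
    moreover have "q b a \<ge> 0" using PC aU bU ab by simp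
    moreover have "q a b = \<Lambda> m j" "q b a = \<Lambda> j m" using con[OF m j mj a b] con[OF j m mj[symmetric] b a] by auto
    ultimately have L: "\<Lambda> m j \<ge> 0" "\<Lambda> j m \<ge> 0" "\<Lambda> m j + \<Lambda> j m \<ge> 1" by auto
    have "\<Lambda> m j * real (card (A j)) \<ge> \<Lambda> m j" using mult_left_mono[OF c1[OF j] L(1)] by simp
    moreover have "\<Lambda> j m * real (card (A m)) \<ge> \<Lambda> j m" using mult_left_mono[OF c1[OF m] L(2)] by simp
    ultimately show "0 \<le> \<Lambda> m j * real (card (A j)) \<and> 0 < \<Lambda> m j * real (card (A j)) + \<Lambda> j m * real (card (A m))"
      using L by linarith
  qed
qed

theorem proposition3:
  fixes U :: "'a set" and q q' :: "'a \<Rightarrow> 'a \<Rightarrow> real"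
    and k :: nat and A :: "nat \<Rightarrow> 'a set" and \<Lambda> :: "nat \<Rightarrow> nat \<Rightarrow> real"
  assumes "finite U"
    and "pcmc_rates U q" and "pcmc_rates U q'"
    and "contractible_partition U q k A \<Lambda>" and "contractible_partition U q' k A \<Lambda>"
    and "i \<in> {1..k}"
  shows "(\<Sum>x\<in>A i. pcmc_pi U q x) = (\<Sum>x\<in>A i. pcmc_pi U q' x)"
proof -
  have "A i \<noteq> {}" "A i \<subseteq> U" using assms(4,6) unfolding contractible_partition_def is_partition_def by blast+
  then have Une: "U \<noteq> {}" by blast
  have s1: "stat {1..k} (\<lambda>m j. \<Lambda> m j * real (card (A j))) (\<lambda>j. sum (pcmc_pi U q) (A j))"
    by (rule agg_stat[OF assms(2,4) pi_stat[OF assms(2) Une]])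
  have s2: "stat {1..k} (\<lambda>m j. \<Lambda> m j * real (card (A j))) (\<lambda>j. sum (pcmc_pi U q') (A j))"
    by (rule agg_stat[OF assms(3,5) pi_stat[OF assms(3) Une]])
  have "{1..k} \<noteq> {}" using assms(6) by blast
  from main[OF agg_tour[OF assms(2,4)] this] s1 s2 assms(6) show ?thesis by blast
qed

end
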